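(* Consider the one-hidden-layer network and empirical squared loss $\mathcal{L}$ described in the context (with $d>1$ and $\alpha^+\neq\alpha^-$). Let $\overline{\mathbf{P}}\in\mathbb{R}^D$ be a stationary point of $\mathcal{L}$. If no hidden neuron $i\in I$ is an escape neuron at $\overline{\mathbf{P}}$, then $\overline{\mathbf{P}}$ is a local minimum of $\mathcal{L}$. Moreover, when $|J|=1$, the converse also holds: if $\overline{\mathbf{P}}$ is a stationary point that is a local minimum of $\mathcal{L}$, then no hidden neuron is an escape neuron at $\overline{\mathbf{P}}$.
   Context: Fix an integer $d>1$, finite nonempty index sets $I$ (hidden neurons), $J$ (output neurons), $K$ (training samples), and reals $\alpha^+\neq\alpha^-$. Let $\rho(z)=\alpha^+ z$ for $z\ge 0$ and $\rho(z)=\alpha^- z$ for $z<0$, applied componentwise to vectors. The parameters are $\mathbf{P}=(W,H)\in\mathbb{R}^D$, $D=|J||I|+|I|d$, where $W\in\mathbb{R}^{|I|\times d}$ has rows $\mathbf{w}_i\in\mathbb{R}^d$ ($i\in I$) and $H=(h_{ji})\in\mathbb{R}^{|J|\times|I|}$. The network output on input $\mathbf{x}\in\mathbb{R}^d$ is $\hat{\mathbf{y}}(\mathbf{P};\mathbf{x})=H\rho(W\mathbf{x})$. Given training data $\mathbf{x}_k\in\mathbb{R}^d$, $\mathbf{y}_k\in\mathbb{R}^{|J|}$ ($k\in K$), the loss is $\mathcal{L}(\mathbf{P})=\frac12\sum_{k\in K}\|\hat{\mathbf{y}}(\mathbf{P};\mathbf{x}_k)-\mathbf{y}_k\|^2$.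 Write $\hat y_{kj}$ for the $j$-th component of $\hat{\mathbf{y}}(\mathbf{P};\mathbf{x}_k)$ and $e_{kj}=\hat y_{kj}-y_{kj}$. Stationary point: $\overline{\mathbf{P}}$ is a stationary point if $\lim_{\alpha\to0^+}\frac{\mathcal{L}(\overline{\mathbf{P}}+\alpha\mathbf{d})-\mathcal{L}(\overline{\mathbf{P}})}{\alpha}\ge 0$ for every $\mathbf{d}\in\mathbb{R}^D$. Tangential directions: if $\mathbf{w}_i\neq\mathbf{0}$, a tangential direction of $\mathbf{w}_i$ is any unit vector $\mathbf{v}_i\in\mathbb{R}^d$ with $\mathbf{v}_i\cdot\mathbf{w}_i=0$; if $\mathbf{w}_i=\mathbf{0}$, it is any unit vector $\mathbf{v}_i\in\mathbb{R}^d$. For a tangential direction $\mathbf{v}_i$, define $\mathbf{d}_{ji}^{\mathbf{v}_i}=\lim_{\Delta\to0^+}\Big(\sum_{k:(\mathbf{w}_i+\Delta\mathbf{v}_i)\cdot\mathbf{x}_k>0}\alpha^+e_{kj}\mathbf{x}_k+\sum_{k:(\mathbf{w}_i+\Delta\mathbf{v}_i)\cdot\mathbf{x}_k<0}\alpha^-e_{kj}\mathbf{x}_k\Big)$ (the index sets are constant for all small $\Delta>0$); the tangential derivative of $\mathcal{L}$ at $\mathbf{P}$ in direction $\mathbf{v}_i$ (only $\mathbf{w}_i$ moved) equals $\sum_{j\in J}h_{ji}\mathbf{d}_{ji}^{\mathbf{v}_i}\cdot\mathbf{v}_i$. Escape neuron: at a stationary point $\overline{\mathbf{P}}$ (with weights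 $\overline{\mathbf{w}}_i,\overline{h}_{ji}$ and the quantities above evaluated at $\overline{\mathbf{P}}$), hidden neuron $i$ is an escape neuron iff there exist $j'\in J$ and a tangential direction $\mathbf{v}_i$ of $\overline{\mathbf{w}}_i$ with $\sum_{j\in J}\overline{h}_{ji}\mathbf{d}_{ji}^{\mathbf{v}_i}\cdot\mathbf{v}_i=0$ and $\mathbf{d}_{j'i}^{\mathbf{v}_i}\cdot\mathbf{v}_i\neq0$. *)

theory Defs
  imports "HOL-Analysis.Analysis"
begin

text \<open>Conventions: the hidden neurons, output neurons and training samples are the
  finite (nonempty) types 'i, 'j, 'k; the input space is real^'n with d = CARD('n).
  A parameter P = (W, H) consists of W :: (real^'n)^'i (rows w_i) and
  H :: real^'i^'j (entries h_ji), so the parameter space is a Euclidean space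
  of dimension |J||I| + |I|d.\<close>

definition leaky :: "real \<Rightarrow> real \<Rightarrow> real \<Rightarrow> real" where
  "leaky ap am z = (if z \<ge> 0 then ap * z else am * z)"

definition net_out ::
  "real \<Rightarrow> real \<Rightarrow> ((real^'n)^'i) \<times> (real^'i^'j) \<Rightarrow> real^'n \<Rightarrow> real^'j" where
  "net_out ap am P x = (\<chi> j. \<Sum>i\<in>UNIV. (snd P $ j $ i) * leaky ap am ((fst P $ i) \<bullet> x))"

definition loss ::
  "real \<Rightarrow> real \<Rightarrow> ('k::finite \<Rightarrow> real^'n) \<Rightarrow> ('k \<Rightarrow> real^'j)
   \<Rightarrow> ((real^'n)^'i) \<times> (real^'i^'j) \<Rightarrow> real" where
  "loss ap am xs ys P = (1/2) * (\<Sum>k\<in>UNIV. (norm (net_out ap am P (xs k) - ys k))\<^sup>2)"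

definition resid ::
  "real \<Rightarrow> real \<Rightarrow> ('k::finite \<Rightarrow> real^'n) \<Rightarrow> ('k \<Rightarrow> real^'j)
   \<Rightarrow> ((real^'n)^'i) \<times> (real^'i^'j) \<Rightarrow> 'k \<Rightarrow> 'j \<Rightarrow> real" where
  "resid ap am xs ys P k j = net_out ap am P (xs k) $ j - ys k $ j"

definition stationary ::
  "(((real^'n)^'i) \<times> (real^'i^'j) \<Rightarrow> real) \<Rightarrow> ((real^'n)^'i) \<times> (real^'i^'j) \<Rightarrow> bool" where
  "stationary L P \<longleftrightarrow>
     (\<forall>d. \<exists>l. ((\<lambda>\<alpha>. (L (P + \<alpha> *\<^sub>R d) - L P) / \<alpha>) \<longlongrightarrow> l) (at_right 0) \<and> l \<ge> 0)"

definition local_minimum ::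
  "(((real^'n)^'i) \<times> (real^'i^'j) \<Rightarrow> real) \<Rightarrow> ((real^'n)^'i) \<times> (real^'i^'j) \<Rightarrow> bool" where
  "local_minimum L P \<longleftrightarrow> (\<exists>e>0. \<forall>Q. dist Q P < e \<longrightarrow> L P \<le> L Q)"

definition tangential :: "real^'n \<Rightarrow> real^'n \<Rightarrow> bool" where
  "tangential w v \<longleftrightarrow> norm v = 1 \<and> (w \<noteq> 0 \<longrightarrow> v \<bullet> w = 0)"

definition dvec ::
  "real \<Rightarrow> real \<Rightarrow> ('k::finite \<Rightarrow> real^'n) \<Rightarrow> ('k \<Rightarrow> real^'j)
   \<Rightarrow> ((real^'n)^'i) \<times> (real^'i^'j) \<Rightarrow> 'j \<Rightarrow> 'i \<Rightarrow> real^'n \<Rightarrow> real^'n" where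
  "dvec ap am xs ys P j i v =
     Lim (at_right 0) (\<lambda>\<Delta>.
        (\<Sum>k\<in>{k. (fst P $ i + \<Delta> *\<^sub>R v) \<bullet> xs k > 0}. (ap * resid ap am xs ys P k j) *\<^sub>R xs k)
      + (\<Sum>k\<in>{k. (fst P $ i + \<Delta> *\<^sub>R v) \<bullet> xs k < 0}. (am * resid ap am xs ys P k j) *\<^sub>R xs k))"

definition escape_neuron ::
  "real \<Rightarrow> real \<Rightarrow> ('k::finite \<Rightarrow> real^'n) \<Rightarrow> ('k \<Rightarrow> real^'j)
   \<Rightarrow> ((real^'n)^'i) \<times> (real^'i^'j) \<Rightarrow> 'i \<Rightarrow> bool" where
  "escape_neuron ap am xs ys P i \<longleftrightarrow>
     (\<exists>j' v. tangential (fst P $ i) v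
        \<and> (\<Sum>j\<in>UNIV. snd P $ j $ i * (dvec ap am xs ys P j i v \<bullet> v)) = 0
        \<and> dvec ap am xs ys P j' i v \<bullet> v \<noteq> 0)"

end

theory Submission
  imports Defs "HOL-Analysis.Analysis"
begin


definition lin :: "real \<Rightarrow> real \<Rightarrow> real^'n \<Rightarrow> real^'n \<Rightarrow> real^'n \<Rightarrow> real" where
  "lin ap am w x \<delta> = (if w \<bullet> x = 0 then leaky ap am (\<delta> \<bullet> x)
      else (if w \<bullet> x > 0 then ap else am) * (\<delta> \<bullet> x))"

lemma leaky_hom: "0 \<le> b \<Longrightarrow> leaky ap am (b * z) = b * leaky ap am z"
  by (cases "b = 0") (auto simp: leaky_def zero_le_mult_iff)

lemma leaky_0[simp]: "leaky ap am 0 = 0" by (simp add: leaky_def)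

lemma lin_zero[simp]: "lin ap am w x 0 = 0" by (simp add: lin_def)

lemma lin_decomp:
  assumes "0 \<le> b"
  shows "lin ap am w x (a *\<^sub>R w + b *\<^sub>R v) = a * leaky ap am (w \<bullet> x) + b * lin ap am w x v"
proof (cases "w \<bullet> x = 0")
  case True
  then show ?thesis using leaky_hom[OF assms, of ap am "v \<bullet> x"]
    by (simp add: lin_def inner_add_left)
next
  case False
  then show ?thesis by (auto simp: lin_def leaky_def inner_add_left algebra_simps)
qed

lemma lin_hom: "0 \<le> b \<Longrightarrow> lin ap am w x (b *\<^sub>R v) = b * lin ap am w x v"
  using lin_decomp[of b ap am w x 0 v] by simp

lemma lin_self: "lin ap am w x w = leaky ap am (w \<bullet> x)"
  by (auto simp: lin_def leaky_def inner_commute)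

lemma F1:
  fixes w :: "real^'n" and xs :: "'k::finite \<Rightarrow> real^'n"
  shows "eventually (\<lambda>\<delta>. \<forall>k. leaky ap am ((w + \<delta>) \<bullet> xs k) - leaky ap am (w \<bullet> xs k)
            = lin ap am w (xs k) \<delta>) (nhds 0)"
proof (rule eventually_all_finite)
  fix k
  have cont: "((\<lambda>\<delta>::real^'n. (w + \<delta>) \<bullet> xs k) \<longlongrightarrow> w \<bullet> xs k) (nhds 0)"
    using tendsto_inner[OF tendsto_add[OF tendsto_const[of w] filterlim_ident[of "nhds (0::real^'n)"]] tendsto_const[of "xs k"]]
    by simp
  show "eventually (\<lambda>\<delta>. leaky ap am ((w + \<delta>) \<bullet> xs k) - leaky ap am (w \<bullet> xs k)
            = lin ap am w (xs k) \<delta>) (nhds 0)"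
  proof (cases "w \<bullet> xs k = 0")
    case True
    then show ?thesis by (simp add: lin_def inner_add_left)
  next
    case False
    show ?thesis
    proof (cases "w \<bullet> xs k > 0")
      case True
      have "eventually (\<lambda>\<delta>. (w + \<delta>) \<bullet> xs k > 0) (nhds 0)"
        using order_tendstoD(1)[OF cont True] .
      then show ?thesis
        by eventually_elim (use True in \<open>auto simp: lin_def leaky_def inner_add_left algebra_simps\<close>)
    next
      case False2: False
      then have neg: "w \<bullet> xs k < 0" using False by simp
      have "eventually (\<lambda>\<delta>. (w + \<delta>) \<bullet> xs k < 0) (nhds 0)"
        using order_tendstoD(2)[OF cont neg] .
      then show ?thesis
        by eventually_elim (use neg in \<open>auto simp: lin_def leaky_def inner_add_left algebra_simps\<close>)
    qed
  qed
qed


lemma normsq_vec: "(norm (v::real^'j))\<^sup>2 = (\<Sum>j\<in>UNIV. (v $ j)\<^sup>2)"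
  unfolding power2_norm_eq_inner inner_vec_def by (simp add: power2_eq_square)

lemma loss_diff:
  fixes xs :: "'k::finite \<Rightarrow> real^'n" and ys :: "'k \<Rightarrow> real^'j"
    and P Q :: "((real^'n)^'i) \<times> (real^'i^'j)"
  shows "loss ap am xs ys Q - loss ap am xs ys P =
    (\<Sum>k\<in>UNIV. \<Sum>j\<in>UNIV. resid ap am xs ys P k j * (net_out ap am Q (xs k) $ j - net_out ap am P (xs k) $ j)
       + (net_out ap am Q (xs k) $ j - net_out ap am P (xs k) $ j)\<^sup>2 / 2)"
proof -
  have "loss ap am xs ys Q - loss ap am xs ys P =
    (\<Sum>k\<in>UNIV. \<Sum>j\<in>UNIV. (1/2) * (net_out ap am Q (xs k) $ j - ys k $ j)\<^sup>2
        - (1/2) * (net_out ap am P (xs k) $ j - ys k $ j)\<^sup>2)"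
    by (simp add: loss_def normsq_vec sum_subtractf sum_distrib_left)
  show ?thesis
    unfolding \<open>loss ap am xs ys Q - loss ap am xs ys P = _\<close>
    by (intro sum.cong refl) (simp add: resid_def power2_eq_square field_simps)
qed


lemma ev_lin_right:
  fixes W :: "(real^'n)^'i" and dW :: "(real^'n)^'i" and xs :: "'k::finite \<Rightarrow> real^'n"
  shows "eventually (\<lambda>\<alpha>::real. 0 < \<alpha> \<and> (\<forall>i k. leaky ap am ((W $ i + \<alpha> *\<^sub>R dW $ i) \<bullet> xs k)
     - leaky ap am (W $ i \<bullet> xs k) = \<alpha> * lin ap am (W $ i) (xs k) (dW $ i))) (at_right 0)"
proof -
  have "eventually (\<lambda>\<alpha>::real. \<forall>i k. leaky ap am ((W $ i + \<alpha> *\<^sub>R dW $ i) \<bullet> xs k)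
     - leaky ap am (W $ i \<bullet> xs k) = lin ap am (W $ i) (xs k) (\<alpha> *\<^sub>R dW $ i)) (at_right 0)"
  proof (rule eventually_all_finite)
    fix i
    have lim: "filterlim (\<lambda>\<alpha>::real. \<alpha> *\<^sub>R dW $ i) (nhds 0) (at_right 0)"
      using tendsto_scaleR[OF tendsto_ident_at[of "0::real" "{0<..}"] tendsto_const[of "dW $ i"]]
      by simp
    show "eventually (\<lambda>\<alpha>::real. \<forall>k. leaky ap am ((W $ i + \<alpha> *\<^sub>R dW $ i) \<bullet> xs k)
     - leaky ap am (W $ i \<bullet> xs k) = lin ap am (W $ i) (xs k) (\<alpha> *\<^sub>R dW $ i)) (at_right 0)"
      using lim F1[of ap am "W $ i" xs] unfolding filterlim_iff by blast
  qed
  moreover have "eventually (\<lambda>\<alpha>::real. 0 < \<alpha>) (at_right 0)"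
    by (rule eventually_at_right_less)
  ultimately show ?thesis
    by eventually_elim (auto simp: lin_hom)
qed

lemma dir_deriv:
  fixes xs :: "'k::finite \<Rightarrow> real^'n" and ys :: "'k \<Rightarrow> real^'j"
    and P d :: "((real^'n)^'i) \<times> (real^'i^'j)"
  shows "((\<lambda>\<alpha>. (loss ap am xs ys (P + \<alpha> *\<^sub>R d) - loss ap am xs ys P) / \<alpha>) \<longlongrightarrow>
     (\<Sum>k\<in>UNIV. \<Sum>j\<in>UNIV. resid ap am xs ys P k j *
        (\<Sum>i\<in>UNIV. snd P $ j $ i * lin ap am (fst P $ i) (xs k) (fst d $ i)
                 + snd d $ j $ i * leaky ap am (fst P $ i \<bullet> xs k)))) (at_right 0)"
proof -
  define p where "p k j = (\<Sum>i\<in>UNIV. snd P $ j $ i * lin ap am (fst P $ i) (xs k) (fst d $ i)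
                 + snd d $ j $ i * leaky ap am (fst P $ i \<bullet> xs k))" for k j
  define q where "q k j = (\<Sum>i\<in>UNIV. snd d $ j $ i * lin ap am (fst P $ i) (xs k) (fst d $ i))" for k j
  define r where "r k j = resid ap am xs ys P k j" for k j
  define F where "F \<alpha> = (\<Sum>k\<in>UNIV. \<Sum>j\<in>UNIV. r k j * (p k j + \<alpha> * q k j)
      + \<alpha> * (p k j + \<alpha> * q k j)\<^sup>2 / 2)" for \<alpha> :: real
  have "(F \<longlongrightarrow> (\<Sum>k\<in>UNIV. \<Sum>j\<in>UNIV. r k j * (p k j + 0 * q k j)
      + 0 * (p k j + 0 * q k j)\<^sup>2 / 2)) (at_right 0)"
    unfolding F_def by (intro tendsto_intros) auto
  then have limF: "(F \<longlongrightarrow> (\<Sum>k\<in>UNIV. \<Sum>j\<in>UNIV. r k j * p k j)) (at_right 0)" by simp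
  have "eventually (\<lambda>\<alpha>. F \<alpha> = (loss ap am xs ys (P + \<alpha> *\<^sub>R d) - loss ap am xs ys P) / \<alpha>) (at_right 0)"
    using ev_lin_right[of ap am "fst P" "fst d" xs]
  proof eventually_elim
    case (elim \<alpha>)
    then have apos: "0 < \<alpha>" and lk: "\<And>i k. leaky ap am ((fst P $ i + \<alpha> *\<^sub>R fst d $ i) \<bullet> xs k)
       = leaky ap am (fst P $ i \<bullet> xs k) + \<alpha> * lin ap am (fst P $ i) (xs k) (fst d $ i)"
      by (auto simp: algebra_simps)
    have D: "net_out ap am (P + \<alpha> *\<^sub>R d) (xs k) $ j - net_out ap am P (xs k) $ j
        = \<alpha> * (p k j + \<alpha> * q k j)" for k j
    proof -
      have "net_out ap am (P + \<alpha> *\<^sub>R d) (xs k) $ j - net_out ap am P (xs k) $ j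
        = (\<Sum>i\<in>UNIV. (snd P $ j $ i + \<alpha> * snd d $ j $ i) *
             (leaky ap am (fst P $ i \<bullet> xs k) + \<alpha> * lin ap am (fst P $ i) (xs k) (fst d $ i))
             - snd P $ j $ i * leaky ap am (fst P $ i \<bullet> xs k))"
        by (simp add: net_out_def lk sum_subtractf)
      also have "\<dots> = \<alpha> * (p k j + \<alpha> * q k j)"
        unfolding p_def q_def
        by (simp add: sum_distrib_left sum.distrib[symmetric] algebra_simps)
      finally show ?thesis .
    qed
    have "(\<Sum>k\<in>UNIV. \<Sum>j\<in>UNIV. r k j * (\<alpha> * (p k j + \<alpha> * q k j)) + (\<alpha> * (p k j + \<alpha> * q k j))\<^sup>2 / 2) / \<alpha>
       = (\<Sum>k\<in>UNIV. \<Sum>j\<in>UNIV. (r k j * (\<alpha> * (p k j + \<alpha> * q k j)) + (\<alpha> * (p k j + \<alpha> * q k j))\<^sup>2 / 2) / \<alpha>)"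
      by (simp add: sum_divide_distrib)
    also have "\<dots> = F \<alpha>" unfolding F_def
      by (intro sum.cong refl) (use apos in \<open>simp add: power2_eq_square field_simps\<close>)
    finally show ?case
      unfolding loss_diff D r_def by simp
  qed
  then show ?thesis
    using limF unfolding p_def r_def by (simp add: tendsto_cong)
qed


definition chat where
  "chat ap am xs ys P i j \<delta> = (\<Sum>k\<in>UNIV. resid ap am xs ys P k j * lin ap am (fst P $ i) (xs k) \<delta>)"

definition ahat where
  "ahat ap am xs ys P i \<delta> = (\<Sum>j\<in>UNIV. snd P $ j $ i * chat ap am xs ys P i j \<delta>)"

lemma stat_dir:
  fixes xs :: "'k::finite \<Rightarrow> real^'n" and ys :: "'k \<Rightarrow> real^'j"
    and P d :: "((real^'n)^'i) \<times> (real^'i^'j)"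
  assumes "stationary (loss ap am xs ys) P"
  shows "0 \<le> (\<Sum>k\<in>UNIV. \<Sum>j\<in>UNIV. resid ap am xs ys P k j *
        (\<Sum>i\<in>UNIV. snd P $ j $ i * lin ap am (fst P $ i) (xs k) (fst d $ i)
                 + snd d $ j $ i * leaky ap am (fst P $ i \<bullet> xs k)))"
proof -
  obtain l where l: "((\<lambda>\<alpha>. (loss ap am xs ys (P + \<alpha> *\<^sub>R d) - loss ap am xs ys P) / \<alpha>) \<longlongrightarrow> l) (at_right 0)" "l \<ge> 0"
    using assms unfolding stationary_def by blast
  show ?thesis using tendsto_unique[OF _ dir_deriv l(1)] l(2) by simp
qed

lemma ifm: "(if Q then a else (0::real)) * b = (if Q then a*b else 0)" by simp

lemma stat_a:
  fixes xs :: "'k::finite \<Rightarrow> real^'n" and ys :: "'k \<Rightarrow> real^'j"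
    and P :: "((real^'n)^'i) \<times> (real^'i^'j)"
  assumes "stationary (loss ap am xs ys) P"
  shows "(\<Sum>k\<in>UNIV. resid ap am xs ys P k j * leaky ap am (fst P $ i \<bullet> xs k)) = 0"
proof -
  have "0 \<le> c * (\<Sum>k\<in>UNIV. resid ap am xs ys P k j * leaky ap am (fst P $ i \<bullet> xs k))" for c
  proof -
    have "0 \<le> (\<Sum>k\<in>UNIV. \<Sum>j'\<in>UNIV. resid ap am xs ys P k j' *
        (\<Sum>i'\<in>UNIV. snd P $ j' $ i' * lin ap am (fst P $ i') (xs k) (fst (0, axis j (axis i c)) $ i')
                 + snd (0::(real^'n)^'i, axis j (axis i c)) $ j' $ i' * leaky ap am (fst P $ i' \<bullet> xs k)))"
      by (rule stat_dir[OF assms])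
    also have "\<dots> = (\<Sum>k\<in>UNIV. \<Sum>j'\<in>UNIV. resid ap am xs ys P k j' *
        (if j' = j then c * leaky ap am (fst P $ i \<bullet> xs k) else 0))"
      by (intro sum.cong refl arg_cong2[where f="(*)"]) (auto simp: axis_def ifm sum.delta cong: if_cong)
    also have "\<dots> = c * (\<Sum>k\<in>UNIV. resid ap am xs ys P k j * leaky ap am (fst P $ i \<bullet> xs k))"
      by (simp add: sum_distrib_left if_distrib sum.delta cong: if_cong) (simp add: algebra_simps)
    finally show ?thesis .
  qed
  from this[of 1] this[of "-1"] show ?thesis by simp
qed

lemma stat_b:
  fixes xs :: "'k::finite \<Rightarrow> real^'n" and ys :: "'k \<Rightarrow> real^'j"
    and P :: "((real^'n)^'i) \<times> (real^'i^'j)"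
  assumes "stationary (loss ap am xs ys) P"
  shows "0 \<le> ahat ap am xs ys P i \<delta>"
proof -
  have "0 \<le> (\<Sum>k\<in>UNIV. \<Sum>j'\<in>UNIV. resid ap am xs ys P k j' *
        (\<Sum>i'\<in>UNIV. snd P $ j' $ i' * lin ap am (fst P $ i') (xs k) (fst (axis i \<delta>, 0::real^'i^'j) $ i')
                 + snd (axis i \<delta>, 0::real^'i^'j) $ j' $ i' * leaky ap am (fst P $ i' \<bullet> xs k)))"
    by (rule stat_dir[OF assms])
  also have "\<dots> = (\<Sum>k\<in>UNIV. \<Sum>j'\<in>UNIV. resid ap am xs ys P k j' *
        (\<Sum>i'\<in>UNIV. (if i' = i then snd P $ j' $ i * lin ap am (fst P $ i) (xs k) \<delta> else 0)))"
    by (intro sum.cong refl arg_cong2[where f="(*)"]) (auto simp: axis_def)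
  also have "\<dots> = ahat ap am xs ys P i \<delta>"
    unfolding ahat_def chat_def
    apply (simp add: sum_distrib_left)
    apply (subst sum.swap)
    apply (simp add: algebra_simps)
    done
  finally show ?thesis .
qed


lemma sum_Collect_if: "sum f {x::'a::finite. Q x} = (\<Sum>x\<in>UNIV. if Q x then f x else 0)"
  using sum.inter_filter[of "UNIV::'a set" f Q] by simp

lemma dvec_inner:
  fixes xs :: "'k::finite \<Rightarrow> real^'n" and ys :: "'k \<Rightarrow> real^'j"
    and P :: "((real^'n)^'i) \<times> (real^'i^'j)"
  shows "dvec ap am xs ys P j i v \<bullet> v = chat ap am xs ys P i j v"
proof -
  define w where "w = fst P $ i"
  define Sp where "Sp = {k. w \<bullet> xs k > 0 \<or> (w \<bullet> xs k = 0 \<and> v \<bullet> xs k > 0)}"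
  define Sm where "Sm = {k. w \<bullet> xs k < 0 \<or> (w \<bullet> xs k = 0 \<and> v \<bullet> xs k < 0)}"
  define E where "E = (\<Sum>k\<in>Sp. (ap * resid ap am xs ys P k j) *\<^sub>R xs k)
      + (\<Sum>k\<in>Sm. (am * resid ap am xs ys P k j) *\<^sub>R xs k)"
  have ev: "eventually (\<lambda>\<Delta>::real. \<forall>k. ((w + \<Delta> *\<^sub>R v) \<bullet> xs k > 0 \<longleftrightarrow> k \<in> Sp)
        \<and> ((w + \<Delta> *\<^sub>R v) \<bullet> xs k < 0 \<longleftrightarrow> k \<in> Sm)) (at_right 0)"
  proof (rule eventually_all_finite)
    fix k
    have cont: "((\<lambda>\<Delta>::real. (w + \<Delta> *\<^sub>R v) \<bullet> xs k) \<longlongrightarrow> w \<bullet> xs k) (at_right 0)"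
      using tendsto_inner[OF tendsto_add[OF tendsto_const[of w] tendsto_scaleR[OF tendsto_ident_at[of "0::real" "{0<..}"] tendsto_const[of v]]] tendsto_const[of "xs k"]]
      by simp
    have pos: "eventually (\<lambda>\<Delta>::real. 0 < \<Delta>) (at_right 0)"
      by (rule eventually_at_right_less)
    show "eventually (\<lambda>\<Delta>::real. ((w + \<Delta> *\<^sub>R v) \<bullet> xs k > 0 \<longleftrightarrow> k \<in> Sp)
        \<and> ((w + \<Delta> *\<^sub>R v) \<bullet> xs k < 0 \<longleftrightarrow> k \<in> Sm)) (at_right 0)"
    proof (cases "w \<bullet> xs k > 0")
      case True
      show ?thesis using order_tendstoD(1)[OF cont True]
        by eventually_elim (use True in \<open>auto simp: Sp_def Sm_def\<close>)
    next
      case False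
      show ?thesis
      proof (cases "w \<bullet> xs k < 0")
        case True
        show ?thesis using order_tendstoD(2)[OF cont True]
          by eventually_elim (use True in \<open>auto simp: Sp_def Sm_def\<close>)
      next
        case False2: False
        then have z: "w \<bullet> xs k = 0" using False by simp
        show ?thesis using pos
          by eventually_elim (use z in \<open>auto simp: Sp_def Sm_def inner_add_left zero_less_mult_iff mult_less_0_iff\<close>)
      qed
    qed
  qed
  have "dvec ap am xs ys P j i v = E"
    unfolding dvec_def w_def[symmetric]
  proof (rule tendsto_Lim[OF trivial_limit_at_right_real])
    show "((\<lambda>\<Delta>. (\<Sum>k\<in>{k. (w + \<Delta> *\<^sub>R v) \<bullet> xs k > 0}. (ap * resid ap am xs ys P k j) *\<^sub>R xs k)
      + (\<Sum>k\<in>{k. (w + \<Delta> *\<^sub>R v) \<bullet> xs k < 0}. (am * resid ap am xs ys P k j) *\<^sub>R xs k)) \<longlongrightarrow> E) (at_right 0)"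
    proof (rule tendsto_eventually)
      show "eventually (\<lambda>\<Delta>. (\<Sum>k\<in>{k. (w + \<Delta> *\<^sub>R v) \<bullet> xs k > 0}. (ap * resid ap am xs ys P k j) *\<^sub>R xs k)
      + (\<Sum>k\<in>{k. (w + \<Delta> *\<^sub>R v) \<bullet> xs k < 0}. (am * resid ap am xs ys P k j) *\<^sub>R xs k) = E) (at_right 0)"
        using ev
      proof eventually_elim
        case (elim \<Delta>)
        then have "{k. (w + \<Delta> *\<^sub>R v) \<bullet> xs k > 0} = Sp" "{k. (w + \<Delta> *\<^sub>R v) \<bullet> xs k < 0} = Sm"
          by auto
        then show ?case unfolding E_def by simp
      qed
    qed
  qed
  moreover have "E \<bullet> v = chat ap am xs ys P i j v"
    unfolding E_def chat_def Sp_def Sm_def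
    apply (simp only: inner_add_left inner_sum_left sum_Collect_if sum.distrib[symmetric])
    apply (intro sum.cong refl)
    apply (auto simp: lin_def leaky_def w_def inner_commute)
    done
  ultimately show ?thesis by simp
qed



lemma cone_bound:
  fixes G :: "'a::euclidean_space set" and a c :: 'a
  assumes fin: "finite G"
    and h: "\<And>\<delta>. (\<forall>g\<in>G. 0 \<le> g \<bullet> \<delta>) \<Longrightarrow> 0 \<le> a \<bullet> \<delta> \<and> (a \<bullet> \<delta> = 0 \<longrightarrow> c \<bullet> \<delta> = 0)"
  shows "\<exists>K\<ge>0. \<forall>\<delta>. (\<forall>g\<in>G. 0 \<le> g \<bullet> \<delta>) \<longrightarrow> c \<bullet> \<delta> \<le> K * (a \<bullet> \<delta>)"
proof -
  define S where "S = convex_cone hull (insert (-a) G)"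
  have "-c \<in> S"
  proof (rule ccontr)
    assume nin: "-c \<notin> S"
    have "closed S" unfolding S_def using fin by (simp add: closed_convex_cone_hull)
    moreover have "convex S" unfolding S_def by (rule convex_convex_cone_hull)
    ultimately obtain u b where ub: "u \<bullet> (-c) < b" "\<forall>x\<in>S. b < u \<bullet> x"
      using separating_hyperplane_closed_point nin by blast
    have "0 \<in> S" unfolding S_def by (rule convex_cone_hull_contains_0)
    with ub have b0: "b < 0" by force
    have nn: "0 \<le> u \<bullet> x" if "x \<in> S" for x
    proof (rule ccontr)
      assume "\<not> 0 \<le> u \<bullet> x"
      then have neg: "u \<bullet> x < 0" by simp
      define t where "t = b / (u \<bullet> x)"
      have "t \<ge> 0" unfolding t_def using neg b0 by (simp add: divide_nonpos_neg)
      then have "t *\<^sub>R x \<in> S" unfolding S_def using that S_def convex_cone_hull_mul by blast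
      then have "b < u \<bullet> (t *\<^sub>R x)" using ub by blast
      also have "u \<bullet> (t *\<^sub>R x) = b" unfolding t_def using neg by simp
      finally show False by simp
    qed
    have "\<forall>g\<in>G. 0 \<le> g \<bullet> u"
      using nn unfolding S_def by (auto simp: inner_commute intro: hull_inc)
    from h[OF this] have "0 \<le> a \<bullet> u" "a \<bullet> u = 0 \<longrightarrow> c \<bullet> u = 0" by auto
    moreover have "0 \<le> (-a) \<bullet> u" using nn[of "-a"] unfolding S_def
      by (simp add: hull_inc inner_commute)
    ultimately have "c \<bullet> u = 0" by simp
    then show False using ub b0 by (simp add: inner_commute)
  qed
  define Z where "Z = {z. \<exists>\<mu>\<ge>0. \<forall>\<delta>. (\<forall>g\<in>G. 0 \<le> g \<bullet> \<delta>) \<longrightarrow> 0 \<le> z \<bullet> \<delta> + \<mu> * (a \<bullet> \<delta>)}"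
  have "convex_cone Z"
    unfolding convex_cone_iff
  proof (intro conjI ballI allI impI)
    show "0 \<in> Z" unfolding Z_def by (rule CollectI, rule exI[of _ 0]) simp
  next
    fix x y assume "x \<in> Z" "y \<in> Z"
    then obtain m1 m2 where "m1 \<ge> 0" "m2 \<ge> 0"
      "\<forall>\<delta>. (\<forall>g\<in>G. 0 \<le> g \<bullet> \<delta>) \<longrightarrow> 0 \<le> x \<bullet> \<delta> + m1 * (a \<bullet> \<delta>)"
      "\<forall>\<delta>. (\<forall>g\<in>G. 0 \<le> g \<bullet> \<delta>) \<longrightarrow> 0 \<le> y \<bullet> \<delta> + m2 * (a \<bullet> \<delta>)"
      unfolding Z_def by blast
    then show "x + y \<in> Z" unfolding Z_def
      by (intro CollectI exI[of _ "m1 + m2"]) (force simp: inner_add_left algebra_simps)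
  next
    fix x :: 'a and t :: real assume "x \<in> Z" "0 \<le> t"
    then obtain m1 where "m1 \<ge> 0"
      "\<forall>\<delta>. (\<forall>g\<in>G. 0 \<le> g \<bullet> \<delta>) \<longrightarrow> 0 \<le> x \<bullet> \<delta> + m1 * (a \<bullet> \<delta>)"
      unfolding Z_def by blast
    then have "\<forall>\<delta>. (\<forall>g\<in>G. 0 \<le> g \<bullet> \<delta>) \<longrightarrow> 0 \<le> t * (x \<bullet> \<delta> + m1 * (a \<bullet> \<delta>))"
      using \<open>0 \<le> t\<close> by simp
    then show "t *\<^sub>R x \<in> Z" unfolding Z_def using \<open>m1 \<ge> 0\<close> \<open>0 \<le> t\<close>
      by (intro CollectI exI[of _ "t * m1"]) (simp add: algebra_simps)
  qed
  moreover have "insert (-a) G \<subseteq> Z"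
  proof
    fix g assume "g \<in> insert (-a) G"
    then show "g \<in> Z"
    proof
      assume "g = -a" then show ?thesis unfolding Z_def by (intro CollectI exI[of _ 1]) simp
    next
      assume "g \<in> G" then show ?thesis unfolding Z_def by (intro CollectI exI[of _ 0]) (simp add: inner_commute)
    qed
  qed
  ultimately have "S \<subseteq> Z" unfolding S_def by (rule hull_minimal[rotated])
  with \<open>-c \<in> S\<close> obtain \<mu> where "\<mu> \<ge> 0" "\<forall>\<delta>. (\<forall>g\<in>G. 0 \<le> g \<bullet> \<delta>) \<longrightarrow> 0 \<le> (-c) \<bullet> \<delta> + \<mu> * (a \<bullet> \<delta>)"
    unfolding Z_def by blast
  then show ?thesis by (intro exI[of _ \<mu>]) auto
qed



lemma ratio_bound:
  fixes w :: "real^'n" and xs :: "'k::finite \<Rightarrow> real^'n" and \<alpha> \<beta> :: "'k \<Rightarrow> real"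
  assumes nonneg: "\<And>\<delta>. 0 \<le> (\<Sum>k\<in>UNIV. \<alpha> k * lin ap am w (xs k) \<delta>)"
    and zero: "\<And>\<delta>. (\<Sum>k\<in>UNIV. \<alpha> k * lin ap am w (xs k) \<delta>) = 0 \<Longrightarrow> (\<Sum>k\<in>UNIV. \<beta> k * lin ap am w (xs k) \<delta>) = 0"
  shows "\<exists>K\<ge>0. \<forall>\<delta>. \<bar>\<Sum>k\<in>UNIV. \<beta> k * lin ap am w (xs k) \<delta>\<bar> \<le> K * (\<Sum>k\<in>UNIV. \<alpha> k * lin ap am w (xs k) \<delta>)"
proof -
  define A where "A \<delta> = (\<Sum>k\<in>UNIV. \<alpha> k * lin ap am w (xs k) \<delta>)" for \<delta>
  define C where "C \<delta> = (\<Sum>k\<in>UNIV. \<beta> k * lin ap am w (xs k) \<delta>)" for \<delta>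
  define l where "l \<sigma> k = (if w \<bullet> xs k = 0 then (if \<sigma> k then ap else am) *\<^sub>R xs k
        else (if w \<bullet> xs k > 0 then ap else am) *\<^sub>R xs k)" for \<sigma> :: "'k \<Rightarrow> bool" and k
  define G where "G \<sigma> = (\<lambda>k. (if \<sigma> k then 1 else -1) *\<^sub>R xs k) ` {k. w \<bullet> xs k = 0}" for \<sigma> :: "'k \<Rightarrow> bool"
  have lin_l: "lin ap am w (xs k) \<delta> = l \<sigma> k \<bullet> \<delta>" if "\<forall>g\<in>G \<sigma>. 0 \<le> g \<bullet> \<delta>" for \<sigma> k \<delta>
  proof (cases "w \<bullet> xs k = 0")
    case True
    then have "(if \<sigma> k then 1 else -1) *\<^sub>R xs k \<in> G \<sigma>" unfolding G_def by blast
    with that have "0 \<le> ((if \<sigma> k then 1 else -1) *\<^sub>R xs k) \<bullet> \<delta>" by blast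
    then show ?thesis using True
      by (cases "\<sigma> k") (auto simp: lin_def l_def leaky_def inner_commute)
  next
    case False
    then show ?thesis by (auto simp: lin_def l_def inner_commute)
  qed
  have Kex: "\<exists>K\<ge>0. \<forall>\<delta>. (\<forall>g\<in>G \<sigma>. 0 \<le> g \<bullet> \<delta>) \<longrightarrow> \<bar>C \<delta>\<bar> \<le> K * A \<delta>" for \<sigma>
  proof -
    define a where "a = (\<Sum>k\<in>UNIV. \<alpha> k *\<^sub>R l \<sigma> k)"
    define c where "c = (\<Sum>k\<in>UNIV. \<beta> k *\<^sub>R l \<sigma> k)"
    have Aa: "A \<delta> = a \<bullet> \<delta>" and Cc: "C \<delta> = c \<bullet> \<delta>" if "\<forall>g\<in>G \<sigma>. 0 \<le> g \<bullet> \<delta>" for \<delta>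
      unfolding A_def C_def a_def c_def using lin_l[OF that]
      by (simp_all add: inner_sum_left)
    have fin: "finite (G \<sigma>)" unfolding G_def by simp
    have "\<exists>K\<ge>0. \<forall>\<delta>. (\<forall>g\<in>G \<sigma>. 0 \<le> g \<bullet> \<delta>) \<longrightarrow> c \<bullet> \<delta> \<le> K * (a \<bullet> \<delta>)"
    proof (rule cone_bound[OF fin])
      fix \<delta> assume d: "\<forall>g\<in>G \<sigma>. 0 \<le> g \<bullet> \<delta>"
      show "0 \<le> a \<bullet> \<delta> \<and> (a \<bullet> \<delta> = 0 \<longrightarrow> c \<bullet> \<delta> = 0)"
        using nonneg[of \<delta>] zero[of \<delta>] Aa[OF d] Cc[OF d] unfolding A_def C_def by simp
    qed
    then obtain K1 where K1: "K1 \<ge> 0" "\<forall>\<delta>. (\<forall>g\<in>G \<sigma>. 0 \<le> g \<bullet> \<delta>) \<longrightarrow> c \<bullet> \<delta> \<le> K1 * (a \<bullet> \<delta>)" by blast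
    have "\<exists>K\<ge>0. \<forall>\<delta>. (\<forall>g\<in>G \<sigma>. 0 \<le> g \<bullet> \<delta>) \<longrightarrow> (-c) \<bullet> \<delta> \<le> K * (a \<bullet> \<delta>)"
    proof (rule cone_bound[OF fin])
      fix \<delta> assume d: "\<forall>g\<in>G \<sigma>. 0 \<le> g \<bullet> \<delta>"
      show "0 \<le> a \<bullet> \<delta> \<and> (a \<bullet> \<delta> = 0 \<longrightarrow> (-c) \<bullet> \<delta> = 0)"
        using nonneg[of \<delta>] zero[of \<delta>] Aa[OF d] Cc[OF d] unfolding A_def C_def by simp
    qed
    then obtain K2 where K2: "K2 \<ge> 0" "\<forall>\<delta>. (\<forall>g\<in>G \<sigma>. 0 \<le> g \<bullet> \<delta>) \<longrightarrow> (-c) \<bullet> \<delta> \<le> K2 * (a \<bullet> \<delta>)" by blast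
    show ?thesis
    proof (intro exI[of _ "K1 + K2"] conjI allI impI)
      show "0 \<le> K1 + K2" using K1 K2 by simp
      fix \<delta> assume d: "\<forall>g\<in>G \<sigma>. 0 \<le> g \<bullet> \<delta>"
      have "0 \<le> a \<bullet> \<delta>" using nonneg[of \<delta>] Aa[OF d] unfolding A_def by simp
      then have "K1 * (a \<bullet> \<delta>) \<le> (K1 + K2) * (a \<bullet> \<delta>)" "K2 * (a \<bullet> \<delta>) \<le> (K1 + K2) * (a \<bullet> \<delta>)"
        using K1 K2 by (simp_all add: mult_right_mono)
      then show "\<bar>C \<delta>\<bar> \<le> (K1 + K2) * A \<delta>"
        using K1(2) K2(2) d Aa[OF d] Cc[OF d] by (auto simp: abs_le_iff)
    qed
  qed
  then obtain Kf where Kf: "\<And>\<sigma>. Kf \<sigma> \<ge> 0" "\<And>\<sigma> \<delta>. (\<forall>g\<in>G \<sigma>. 0 \<le> g \<bullet> \<delta>) \<Longrightarrow> \<bar>C \<delta>\<bar> \<le> Kf \<sigma> * A \<delta>"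
    by metis
  show ?thesis
  proof (intro exI[of _ "\<Sum>\<sigma>\<in>UNIV. Kf \<sigma>"] conjI allI)
    show "0 \<le> (\<Sum>\<sigma>\<in>UNIV. Kf \<sigma>)" using Kf(1) by (simp add: sum_nonneg)
    fix \<delta>
    define \<sigma> where "\<sigma> k = (0 \<le> xs k \<bullet> \<delta>)" for k
    have "\<forall>g\<in>G \<sigma>. 0 \<le> g \<bullet> \<delta>" unfolding G_def \<sigma>_def by auto
    then have "\<bar>C \<delta>\<bar> \<le> Kf \<sigma> * A \<delta>" by (rule Kf(2))
    also have "\<dots> \<le> (\<Sum>\<sigma>\<in>UNIV. Kf \<sigma>) * A \<delta>"
      using nonneg[of \<delta>] Kf(1) unfolding A_def
      by (intro mult_right_mono member_le_sum) auto
    finally show "\<bar>\<Sum>k\<in>UNIV. \<beta> k * lin ap am w (xs k) \<delta>\<bar> \<le> (\<Sum>\<sigma>\<in>UNIV. Kf \<sigma>) * (\<Sum>k\<in>UNIV. \<alpha> k * lin ap am w (xs k) \<delta>)"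
      unfolding A_def C_def .
  qed
qed



lemma decomp:
  fixes w \<delta> :: "real^'n"
  shows "\<exists>a b v. 0 \<le> b \<and> \<delta> = a *\<^sub>R w + b *\<^sub>R v \<and> (b = 0 \<or> tangential w v)"
proof -
  define a where "a = (if w = 0 then 0 else (\<delta> \<bullet> w) / (w \<bullet> w))"
  define u where "u = \<delta> - a *\<^sub>R w"
  have uw: "w \<noteq> 0 \<Longrightarrow> u \<bullet> w = 0"
    unfolding u_def a_def by (simp add: inner_diff_left)
  show ?thesis
  proof (cases "u = 0")
    case True
    then show ?thesis by (intro exI[of _ a] exI[of _ 0] exI[of _ 0]) (simp add: u_def)
  next
    case False
    have "tangential w (u /\<^sub>R norm u)"
      unfolding tangential_def using False uw by simp
    moreover have "\<delta> = a *\<^sub>R w + norm u *\<^sub>R (u /\<^sub>R norm u)"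
      using False by (simp add: u_def)
    ultimately show ?thesis by (intro exI[of _ a] exI[of _ "norm u"] exI[of _ "u /\<^sub>R norm u"]) simp
  qed
qed

lemma chat_decomp:
  fixes xs :: "'k::finite \<Rightarrow> real^'n" and ys :: "'k \<Rightarrow> real^'j"
    and P :: "((real^'n)^'i) \<times> (real^'i^'j)"
  assumes st: "stationary (loss ap am xs ys) P" and b: "0 \<le> b"
  shows "chat ap am xs ys P i j (a *\<^sub>R (fst P $ i) + b *\<^sub>R v) = b * chat ap am xs ys P i j v"
proof -
  have "chat ap am xs ys P i j (a *\<^sub>R (fst P $ i) + b *\<^sub>R v)
     = a * (\<Sum>k\<in>UNIV. resid ap am xs ys P k j * leaky ap am (fst P $ i \<bullet> xs k)) + b * chat ap am xs ys P i j v"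
    unfolding chat_def lin_decomp[OF b]
    by (simp add: sum_distrib_left sum.distrib algebra_simps)
  then show ?thesis using stat_a[OF st] by simp
qed

lemma ahat_decomp:
  fixes xs :: "'k::finite \<Rightarrow> real^'n" and ys :: "'k \<Rightarrow> real^'j"
    and P :: "((real^'n)^'i) \<times> (real^'i^'j)"
  assumes st: "stationary (loss ap am xs ys) P" and b: "0 \<le> b"
  shows "ahat ap am xs ys P i (a *\<^sub>R (fst P $ i) + b *\<^sub>R v) = b * ahat ap am xs ys P i v"
  unfolding ahat_def chat_decomp[OF st b] by (simp add: sum_distrib_left algebra_simps)

lemma noesc_zero:
  fixes xs :: "'k::finite \<Rightarrow> real^'n" and ys :: "'k \<Rightarrow> real^'j"
    and P :: "((real^'n)^'i) \<times> (real^'i^'j)"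
  assumes st: "stationary (loss ap am xs ys) P" and ne: "\<not> escape_neuron ap am xs ys P i"
    and z: "ahat ap am xs ys P i \<delta> = 0"
  shows "chat ap am xs ys P i j \<delta> = 0"
proof -
  obtain a b v where abv: "0 \<le> b" "\<delta> = a *\<^sub>R (fst P $ i) + b *\<^sub>R v" "b = 0 \<or> tangential (fst P $ i) v"
    using decomp by blast
  show ?thesis
  proof (cases "b = 0")
    case True
    then show ?thesis using chat_decomp[OF st abv(1)] abv(2) by simp
  next
    case False
    then have tv: "tangential (fst P $ i) v" using abv(3) by simp
    have "b * ahat ap am xs ys P i v = 0" using z ahat_decomp[OF st abv(1)] abv(2) by simp
    then have av: "ahat ap am xs ys P i v = 0" using False by simp
    have "(\<Sum>j\<in>UNIV. snd P $ j $ i * (dvec ap am xs ys P j i v \<bullet> v)) = 0"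
      using av by (simp add: dvec_inner ahat_def)
    then have "chat ap am xs ys P i j v = 0"
      using ne tv unfolding escape_neuron_def by (auto simp: dvec_inner)
    then show ?thesis using chat_decomp[OF st abv(1)] abv(2) by simp
  qed
qed

lemma Kbound:
  fixes xs :: "'k::finite \<Rightarrow> real^'n" and ys :: "'k \<Rightarrow> real^'j"
    and P :: "((real^'n)^'i) \<times> (real^'i^'j)"
  assumes st: "stationary (loss ap am xs ys) P" and ne: "\<not> escape_neuron ap am xs ys P i"
  shows "\<exists>K\<ge>0. \<forall>\<delta>. \<bar>chat ap am xs ys P i j \<delta>\<bar> \<le> K * ahat ap am xs ys P i \<delta>"
proof -
  have ah: "ahat ap am xs ys P i \<delta> = (\<Sum>k\<in>UNIV. (\<Sum>j'\<in>UNIV. snd P $ j' $ i * resid ap am xs ys P k j')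
          * lin ap am (fst P $ i) (xs k) \<delta>)" for \<delta>
    unfolding ahat_def chat_def
    apply (simp add: sum_distrib_left sum_distrib_right)
    apply (subst sum.swap)
    apply (simp add: algebra_simps)
    done
  have ch: "chat ap am xs ys P i j \<delta> = (\<Sum>k\<in>UNIV. resid ap am xs ys P k j * lin ap am (fst P $ i) (xs k) \<delta>)" for \<delta>
    by (simp add: chat_def)
  show ?thesis
    unfolding ah ch
    by (rule ratio_bound) (use stat_b[OF st] noesc_zero[OF st ne] in \<open>simp_all add: ah[symmetric] ch[symmetric]\<close>)
qed



lemma swap3: "(\<Sum>k\<in>A. \<Sum>j\<in>B. \<Sum>i\<in>C. f k j i) = (\<Sum>i\<in>C. \<Sum>j\<in>B. \<Sum>k\<in>A. f k j i)"
proof -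
  have "(\<Sum>k\<in>A. \<Sum>j\<in>B. \<Sum>i\<in>C. f k j i) = (\<Sum>k\<in>A. \<Sum>i\<in>C. \<Sum>j\<in>B. f k j i)"
    by (rule sum.cong[OF refl], rule sum.swap)
  also have "\<dots> = (\<Sum>i\<in>C. \<Sum>k\<in>A. \<Sum>j\<in>B. f k j i)" by (rule sum.swap)
  also have "\<dots> = (\<Sum>i\<in>C. \<Sum>j\<in>B. \<Sum>k\<in>A. f k j i)"
    by (rule sum.cong[OF refl], rule sum.swap)
  finally show ?thesis .
qed

lemma suff:
  fixes xs :: "'k::finite \<Rightarrow> real^'n" and ys :: "'k \<Rightarrow> real^'j"
    and P :: "((real^'n)^'i) \<times> (real^'i^'j)"
  assumes st: "stationary (loss ap am xs ys) P" and ne: "\<forall>i. \<not> escape_neuron ap am xs ys P i"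
  shows "local_minimum (loss ap am xs ys) P"
proof -
  define W where "W = fst P"
  define H where "H = snd P"
  have "\<forall>p. \<exists>K\<ge>0. \<forall>\<delta>. \<bar>chat ap am xs ys P (fst p) (snd p) \<delta>\<bar> \<le> K * ahat ap am xs ys P (fst p) \<delta>"
    using Kbound[OF st] ne by blast
  then obtain Kp where Kp: "\<And>p. Kp p \<ge> 0" "\<And>p \<delta>. \<bar>chat ap am xs ys P (fst p) (snd p) \<delta>\<bar> \<le> Kp p * ahat ap am xs ys P (fst p) \<delta>"
    by metis
  define Kf where "Kf i j = Kp (i, j)" for i j
  have Kf: "Kf i j \<ge> 0" "\<bar>chat ap am xs ys P i j \<delta>\<bar> \<le> Kf i j * ahat ap am xs ys P i \<delta>" for i j \<delta>
    unfolding Kf_def using Kp[of "(i,j)"] by auto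
  have E1: "eventually (\<lambda>Q. \<forall>i k. leaky ap am (fst Q $ i \<bullet> xs k) - leaky ap am (W $ i \<bullet> xs k)
      = lin ap am (W $ i) (xs k) (fst Q $ i - W $ i)) (nhds P)"
  proof (rule eventually_all_finite)
    fix i
    have lim: "filterlim (\<lambda>Q::((real^'n)^'i) \<times> (real^'i^'j). fst Q $ i - W $ i) (nhds 0) (nhds P)"
      using tendsto_diff[OF tendsto_vec_nth[where i=i, OF tendsto_fst[OF filterlim_ident[of "nhds P"]]] tendsto_const[of "W $ i"]]
      by (simp add: W_def)
    show "eventually (\<lambda>Q. \<forall>k. leaky ap am (fst Q $ i \<bullet> xs k) - leaky ap am (W $ i \<bullet> xs k)
      = lin ap am (W $ i) (xs k) (fst Q $ i - W $ i)) (nhds P)"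
    proof -
      have "eventually (\<lambda>Q. \<forall>k. leaky ap am ((W $ i + (fst Q $ i - W $ i)) \<bullet> xs k) - leaky ap am (W $ i \<bullet> xs k)
      = lin ap am (W $ i) (xs k) (fst Q $ i - W $ i)) (nhds P)"
        using lim F1[of ap am "W $ i" xs] unfolding filterlim_iff by blast
      then show ?thesis by simp
    qed
  qed
  have E2: "eventually (\<lambda>Q. \<forall>i j. \<bar>snd Q $ j $ i - H $ j $ i\<bar> * Kf i j < 1 / real CARD('j)) (nhds P)"
  proof (rule eventually_all_finite, rule eventually_all_finite)
    fix i j
    have "((\<lambda>Q::((real^'n)^'i) \<times> (real^'i^'j). \<bar>snd Q $ j $ i - H $ j $ i\<bar> * Kf i j) \<longlongrightarrow> \<bar>H $ j $ i - H $ j $ i\<bar> * Kf i j) (nhds P)"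
      unfolding H_def by (intro tendsto_intros filterlim_ident)
    then have "((\<lambda>Q::((real^'n)^'i) \<times> (real^'i^'j). \<bar>snd Q $ j $ i - H $ j $ i\<bar> * Kf i j) \<longlongrightarrow> 0) (nhds P)"
      by simp
    moreover have "(0::real) < 1 / real CARD('j)" by simp
    ultimately show "eventually (\<lambda>Q. \<bar>snd Q $ j $ i - H $ j $ i\<bar> * Kf i j < 1 / real CARD('j)) (nhds P)"
      by (rule order_tendstoD(2))
  qed
  have "eventually (\<lambda>Q. loss ap am xs ys P \<le> loss ap am xs ys Q) (nhds P)"
    using E1 E2
  proof eventually_elim
    case (elim Q)
    define \<delta> where "\<delta> i = fst Q $ i - W $ i" for i
    define r where "r k j = resid ap am xs ys P k j" for k j
    define D where "D k j = net_out ap am Q (xs k) $ j - net_out ap am P (xs k) $ j" for k j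
    have lk: "leaky ap am (fst Q $ i \<bullet> xs k) = leaky ap am (W $ i \<bullet> xs k) + lin ap am (W $ i) (xs k) (\<delta> i)" for i k
      using elim(1) unfolding \<delta>_def by (simp add: algebra_simps)
    have D: "D k j = (\<Sum>i\<in>UNIV. snd Q $ j $ i * lin ap am (W $ i) (xs k) (\<delta> i)
        + (snd Q $ j $ i - H $ j $ i) * leaky ap am (W $ i \<bullet> xs k))" for k j
      unfolding D_def net_out_def lk
      by (simp add: sum_subtractf[symmetric] W_def H_def algebra_simps)
    have "(\<Sum>k\<in>UNIV. \<Sum>j\<in>UNIV. r k j * D k j)
       = (\<Sum>k\<in>UNIV. \<Sum>j\<in>UNIV. \<Sum>i\<in>UNIV. r k j * (snd Q $ j $ i * lin ap am (W $ i) (xs k) (\<delta> i))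
          + r k j * ((snd Q $ j $ i - H $ j $ i) * leaky ap am (W $ i \<bullet> xs k)))"
      unfolding D by (simp add: sum_distrib_left algebra_simps)
    also have "\<dots> = (\<Sum>i\<in>UNIV. \<Sum>j\<in>UNIV. \<Sum>k\<in>UNIV. r k j * (snd Q $ j $ i * lin ap am (W $ i) (xs k) (\<delta> i))
          + r k j * ((snd Q $ j $ i - H $ j $ i) * leaky ap am (W $ i \<bullet> xs k)))"
      by (rule swap3)
    also have "\<dots> = (\<Sum>i\<in>UNIV. \<Sum>j\<in>UNIV. snd Q $ j $ i * chat ap am xs ys P i j (\<delta> i)
          + (snd Q $ j $ i - H $ j $ i) * (\<Sum>k\<in>UNIV. resid ap am xs ys P k j * leaky ap am (fst P $ i \<bullet> xs k)))"
      unfolding chat_def r_def W_def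
      by (intro sum.cong refl) (simp add: sum.distrib sum_distrib_left mult.assoc mult.left_commute)
    also have "\<dots> = (\<Sum>i\<in>UNIV. \<Sum>j\<in>UNIV. snd Q $ j $ i * chat ap am xs ys P i j (\<delta> i))"
      using stat_a[OF st] by simp
    finally have S: "(\<Sum>k\<in>UNIV. \<Sum>j\<in>UNIV. r k j * D k j) = (\<Sum>i\<in>UNIV. \<Sum>j\<in>UNIV. snd Q $ j $ i * chat ap am xs ys P i j (\<delta> i))" .
    have termi: "0 \<le> (\<Sum>j\<in>UNIV. snd Q $ j $ i * chat ap am xs ys P i j (\<delta> i))" for i
    proof -
      define A where "A = ahat ap am xs ys P i (\<delta> i)"
      have A0: "0 \<le> A" unfolding A_def by (rule stat_b[OF st])
      have each: "H $ j $ i * chat ap am xs ys P i j (\<delta> i) - A / real CARD('j)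
          \<le> snd Q $ j $ i * chat ap am xs ys P i j (\<delta> i)" for j
      proof -
        define c where "c = chat ap am xs ys P i j (\<delta> i)"
        define \<eta> where "\<eta> = snd Q $ j $ i - H $ j $ i"
        have "\<bar>c\<bar> \<le> Kf i j * A" unfolding c_def A_def by (rule Kf(2))
        then have "\<bar>\<eta>\<bar> * \<bar>c\<bar> \<le> \<bar>\<eta>\<bar> * (Kf i j * A)" by (simp add: mult_left_mono)
        also have "\<dots> = (\<bar>\<eta>\<bar> * Kf i j) * A" by simp
        also have "\<dots> \<le> (1 / real CARD('j)) * A"
          using elim(2) A0 unfolding \<eta>_def by (intro mult_right_mono) (auto intro: less_imp_le)
        finally have "\<bar>\<eta> * c\<bar> \<le> A / real CARD('j)" by (simp add: abs_mult)
        then have "- (A / real CARD('j)) \<le> \<eta> * c" by linarith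
        then show ?thesis unfolding c_def \<eta>_def by (simp add: algebra_simps)
      qed
      have "(\<Sum>j\<in>UNIV. H $ j $ i * chat ap am xs ys P i j (\<delta> i) - A / real CARD('j))
          \<le> (\<Sum>j\<in>UNIV. snd Q $ j $ i * chat ap am xs ys P i j (\<delta> i))"
        by (rule sum_mono) (rule each)
      moreover have "(\<Sum>j\<in>UNIV. H $ j $ i * chat ap am xs ys P i j (\<delta> i) - A / real CARD('j)) = 0"
        unfolding sum_subtractf A_def ahat_def H_def by simp
      ultimately show ?thesis by simp
    qed
    have "0 \<le> (\<Sum>k\<in>UNIV. \<Sum>j\<in>UNIV. r k j * D k j)"
      unfolding S by (rule sum_nonneg) (rule termi)
    also have "\<dots> \<le> (\<Sum>k\<in>UNIV. \<Sum>j\<in>UNIV. r k j * D k j + (D k j)\<^sup>2 / 2)"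
      by (intro sum_mono) simp
    also have "\<dots> = loss ap am xs ys Q - loss ap am xs ys P"
      unfolding loss_diff r_def D_def ..
    finally show ?case by simp
  qed
  then show ?thesis unfolding local_minimum_def eventually_nhds_metric by blast
qed



lemma norm_axis_gen: "norm (axis i (x::'a::real_inner)) = norm x"
  by (simp add: norm_eq_sqrt_inner inner_axis_axis)

lemma necc:
  fixes xs :: "'k::finite \<Rightarrow> real^'n" and ys :: "'k \<Rightarrow> real^'j"
    and P :: "((real^'n)^'i) \<times> (real^'i^'j)"
  assumes st: "stationary (loss ap am xs ys) P" and c1: "CARD('j) = 1"
    and lm: "local_minimum (loss ap am xs ys) P"
  shows "\<not> escape_neuron ap am xs ys P i"
proof
  assume "escape_neuron ap am xs ys P i"
  then obtain j' v where tv: "tangential (fst P $ i) v"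
    and s0: "(\<Sum>j\<in>UNIV. snd P $ j $ i * (dvec ap am xs ys P j i v \<bullet> v)) = 0"
    and nz: "dvec ap am xs ys P j' i v \<bullet> v \<noteq> 0"
    unfolding escape_neuron_def by blast
  have U: "(UNIV :: 'j set) = {j'}"
  proof -
    obtain x where "(UNIV :: 'j set) = {x}" using c1 by (rule card_1_singletonE)
    then show ?thesis by (metis UNIV_I singletonD)
  qed
  define W where "W = fst P"
  define H where "H = snd P"
  define c where "c = chat ap am xs ys P i j' v"
  have cnz: "c \<noteq> 0" using nz unfolding c_def by (simp add: dvec_inner)
  have "H $ j' $ i * c = 0" using s0 unfolding U c_def H_def by (simp add: dvec_inner)
  then have H0: "H $ j' $ i = 0" using cnz by simp
  obtain e where e: "e > 0" "\<And>Q. dist Q P < e \<Longrightarrow> loss ap am xs ys P \<le> loss ap am xs ys Q"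
    using lm unfolding local_minimum_def by blast
  obtain r where r: "r > 0" "\<And>\<delta>. dist \<delta> 0 < r \<Longrightarrow> \<forall>k. leaky ap am ((W $ i + \<delta>) \<bullet> xs k) - leaky ap am (W $ i \<bullet> xs k)
            = lin ap am (W $ i) (xs k) \<delta>"
    using F1[of ap am "W $ i" xs] unfolding eventually_nhds_metric by blast
  define s where "s = min (r / 2) (e / 4)"
  have s: "s > 0" "s < r" "s \<le> e / 4" unfolding s_def using r e by auto
  have nv: "norm v = 1" using tv unfolding tangential_def by simp
  have lk: "leaky ap am ((W $ i + s *\<^sub>R v) \<bullet> xs k) = leaky ap am (W $ i \<bullet> xs k) + s * lin ap am (W $ i) (xs k) v" for k
    using r(2)[of "s *\<^sub>R v"] s nv lin_hom[of s ap am "W $ i" "xs k" v] by (auto simp: algebra_simps)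
  define M where "M = (\<Sum>k\<in>UNIV. (leaky ap am ((W $ i + s *\<^sub>R v) \<bullet> xs k))\<^sup>2)"
  have M0: "M \<ge> 0" unfolding M_def by (simp add: sum_nonneg)
  define t where "t = min (e / 4) (s * \<bar>c\<bar> / (M + 1))"
  have "s * \<bar>c\<bar> / (M + 1) > 0" using s cnz M0 by simp
  then have t1: "t > 0" unfolding t_def using e by simp
  have t2: "t \<le> e / 4" unfolding t_def by (rule min.cobounded1)
  have t3: "t \<le> s * \<bar>c\<bar> / (M + 1)" unfolding t_def by (rule min.cobounded2)
  note t = t1 t2 t3
  define \<tau> where "\<tau> = (if c > 0 then - t else t)"
  have tauc: "\<tau> * c = - (t * \<bar>c\<bar>)" and taut: "\<bar>\<tau>\<bar> = t" unfolding \<tau>_def using t by auto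
  define Q where "Q = (W + axis i (s *\<^sub>R v), H + axis j' (axis i \<tau>))"
  have dQ: "dist Q P < e"
  proof -
    have "dist Q P = norm (axis i (s *\<^sub>R v), axis j' (axis i \<tau>))"
      unfolding dist_norm Q_def W_def H_def by (cases P) simp
    also have "\<dots> \<le> norm (axis i (s *\<^sub>R v)) + norm (axis j' (axis i \<tau>))" by (rule norm_Pair_le)
    also have "\<dots> = s + t" using s nv taut by (simp add: norm_axis_gen)
    also have "\<dots> < e" using s t e by simp
    finally show ?thesis .
  qed
  have D: "net_out ap am Q (xs k) $ j - net_out ap am P (xs k) $ j = \<tau> * leaky ap am ((W $ i + s *\<^sub>R v) \<bullet> xs k)" for k j
  proof -
    have jj: "j = j'" using U by auto
    have summ: "(snd P $ j' $ ia + axis i \<tau> $ ia) * leaky ap am ((fst P $ ia + axis i (s *\<^sub>R v) $ ia) \<bullet> xs k)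
        - snd P $ j' $ ia * leaky ap am (fst P $ ia \<bullet> xs k)
        = (if ia = i then \<tau> * leaky ap am ((fst P $ i + s *\<^sub>R v) \<bullet> xs k) else 0)" for ia
      using H0 by (auto simp: axis_def H_def)
    show ?thesis
      unfolding net_out_def Q_def jj W_def H_def
      by (simp add: sum_subtractf[symmetric] summ)
  qed
  have sumr: "(\<Sum>k\<in>UNIV. resid ap am xs ys P k j' * leaky ap am ((W $ i + s *\<^sub>R v) \<bullet> xs k)) = s * c"
  proof -
    have "(\<Sum>k\<in>UNIV. resid ap am xs ys P k j' * leaky ap am ((W $ i + s *\<^sub>R v) \<bullet> xs k))
       = (\<Sum>k\<in>UNIV. resid ap am xs ys P k j' * leaky ap am (W $ i \<bullet> xs k)) + s * c"
      unfolding lk unfolding c_def chat_def W_def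
      by (simp add: distrib_left sum.distrib sum_distrib_left mult.left_commute)
    then show ?thesis using stat_a[OF st, of j' i] by (simp add: W_def)
  qed
  define \<rho>s where "\<rho>s k = leaky ap am ((W $ i + s *\<^sub>R v) \<bullet> xs k)" for k
  have "loss ap am xs ys Q - loss ap am xs ys P
      = (\<Sum>k\<in>UNIV. resid ap am xs ys P k j' * (\<tau> * \<rho>s k) + (\<tau> * \<rho>s k)\<^sup>2 / 2)"
    unfolding loss_diff D U \<rho>s_def by simp
  also have "\<dots> = \<tau> * (\<Sum>k\<in>UNIV. resid ap am xs ys P k j' * \<rho>s k) + \<tau>\<^sup>2 * (\<Sum>k\<in>UNIV. (\<rho>s k)\<^sup>2) / 2"
    by (simp add: sum.distrib sum_distrib_left sum_divide_distrib power_mult_distrib mult.left_commute)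
  also have "\<dots> = \<tau> * (s * c) + \<tau>\<^sup>2 * M / 2"
    using sumr unfolding M_def \<rho>s_def by simp
  also have "\<dots> = - (t * s * \<bar>c\<bar>) + t\<^sup>2 * M / 2"
  proof -
    have e1: "\<tau> * (s * c) = - (t * s * \<bar>c\<bar>)"
      using tauc by (metis mult.left_commute mult.commute mult_minus_right)
    have e2: "\<tau>\<^sup>2 = t\<^sup>2" using taut by (metis power2_abs)
    show ?thesis by (simp only: e1 e2)
  qed
  also have "\<dots> < 0"
  proof -
    have "t * M \<le> s * \<bar>c\<bar> / (M + 1) * M" using mult_right_mono[OF t3 M0] .
    also have "\<dots> < s * \<bar>c\<bar>"
    proof -
      have "s * \<bar>c\<bar> / (M + 1) * M = s * \<bar>c\<bar> * (M / (M + 1))" by simp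
      also have "\<dots> < s * \<bar>c\<bar> * 1" using s cnz M0 by (intro mult_strict_left_mono) auto
      finally show ?thesis by simp
    qed
    finally have "t * M < s * \<bar>c\<bar>" .
    then have "t * (t * M) < t * (s * \<bar>c\<bar>)" using t by simp
    moreover have "0 < s * (t * \<bar>c\<bar>)" using s t cnz by simp
    ultimately show ?thesis by (simp add: power2_eq_square algebra_simps)
  qed
  finally have "loss ap am xs ys Q < loss ap am xs ys P" by simp
  with e(2)[OF dQ] show False by simp
qed


theorem theorem1:
  fixes ap am :: real
    and xs :: "'k::finite \<Rightarrow> real^'n"
    and ys :: "'k \<Rightarrow> real^'j"
    and P :: "((real^'n)^'i) \<times> (real^'i^'j)"
  assumes "CARD('n) > 1"
    and "ap \<noteq> am"
    and "stationary (loss ap am xs ys) P"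
  shows "((\<forall>i. \<not> escape_neuron ap am xs ys P i) \<longrightarrow> local_minimum (loss ap am xs ys) P)
    \<and> (CARD('j) = 1 \<longrightarrow> local_minimum (loss ap am xs ys) P
         \<longrightarrow> (\<forall>i. \<not> escape_neuron ap am xs ys P i))"
  using suff[OF assms(3)] necc[OF assms(3)] by blast

end
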